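(* Let $S$ be a locally compact Hausdorff space with Borel $\sigma$-algebra $\mathscr{S}$, let $\mathscr{S}_0$ be an algebra of subsets of $S$ generating $\mathscr{S}$, and let $X=(X_1,\ldots,X_n)$ be an exchangeable random element of $S^n$ with law $P$, such that: (a) for every $\epsilon>0$ there exist $V\in\mathscr{S}_0$ and a compact $K$ with $V\subset K$ and $\mathbb{P}(X_1\in V)\ge1-\epsilon$; (b) for every $\epsilon>0$ and $V\in\mathscr{S}_0$ there exist an open $O$ and $W\in\mathscr{S}_0$ with $V\subset O\subset W$ and $\mathbb{P}(X_1\in W\setminus V)\le\epsilon$. Suppose there is an increasing sequence $\mathscr{G}_1\subset\mathscr{G}_2\subset\cdots$ of $\sigma$-algebras on $S$ with $\bigcup_k\mathscr{G}_k=\mathscr{S}_0$, and for each $k$ a probability measure $P_k$ on $(S^n,\mathscr{G}_k^n)$ such that \[ \lim_{k\to\infty}\sup_{A\in\mathscr{G}_k^n}|P_k(A)-P(A)|=0, \] and suppose that for some $N>n$ every $P_k$ is $N$-extendible. Then $P$ is $N$-extendible.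
   Context: $\mathscr{G}_k^n$ denotes the product $\sigma$-algebra on $S^n$. A probability measure on $S^m$ (with a product $\sigma$-algebra) is exchangeable if it is invariant under all permutations of coordinates. For $N\ge n$, an exchangeable probability measure $P_n$ on $(S^n,\mathscr{G}^n)$ is $N$-extendible if there is an exchangeable probability measure $P_N$ on $(S^N,\mathscr{G}^N)$ with $P_n(A)=P_N(A\times S^{N-n})$ for all $A\in\mathscr{G}^n$ (here $\mathscr{G}$ is $\mathscr{G}_k$ for $P_k$ and $\mathscr{S}$ for $P$). *)

theory Defs
  imports "HOL-Probability.Probability" "HOL-Combinatorics.Permutations"
begin

text \<open>The product S^m is modelled as functions on {..<m} (extensional), with the
product sigma-algebra PiM {..<m} (\<lambda>_. M).\<close>

definition exchangeable :: "'a measure \<Rightarrow> nat \<Rightarrow> (nat \<Rightarrow> 'a) measure \<Rightarrow> bool" where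
  "exchangeable M m Q \<longleftrightarrow>
     prob_space Q \<and> sets Q = sets (PiM {..<m} (\<lambda>_. M)) \<and>
     (\<forall>\<pi>. \<pi> permutes {..<m} \<longrightarrow>
        distr Q (PiM {..<m} (\<lambda>_. M)) (\<lambda>x. \<lambda>i\<in>{..<m}. x (\<pi> i)) = Q)"

definition extendible :: "'a measure \<Rightarrow> nat \<Rightarrow> nat \<Rightarrow> (nat \<Rightarrow> 'a) measure \<Rightarrow> bool" where
  "extendible M n N Q \<longleftrightarrow>
     exchangeable M n Q \<and>
     (\<exists>QN. exchangeable M N QN \<and>
        (\<forall>A \<in> sets (PiM {..<n} (\<lambda>_. M)).
           measure Q A = measure QN {x \<in> space (PiM {..<N} (\<lambda>_. M)). restrict x {..<n} \<in> A}))"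

end

theory Submission
  imports Defs
begin


lemma cluster_point:
  fixes g :: "nat \<Rightarrow> 'b \<Rightarrow> real"
  assumes rng: "\<And>k A. g k A \<in> {0..1}"
  shows "\<exists>c. \<forall>F \<epsilon> k0. finite F \<longrightarrow> \<epsilon> > 0 \<longrightarrow> (\<exists>k\<ge>k0. \<forall>A\<in>F. \<bar>g k A - c A\<bar> < \<epsilon>)"
proof -
  define K where "K = PiE UNIV (\<lambda>_::'b. {0..1::real})"
  have "compactin (product_topology (\<lambda>_. euclidean) UNIV) K"
    unfolding K_def by (simp add: compactin_PiE)
  hence cK: "compact K" by (simp add: euclidean_product_topology)
  define FF where "FF = filtermap g sequentially"
  have "FF \<noteq> bot" by (simp add: FF_def filtermap_bot_iff)
  moreover have "eventually (\<lambda>x. x \<in> K) FF"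
    using rng by (auto simp: FF_def eventually_filtermap K_def PiE_iff)
  ultimately obtain c where c: "c \<in> K" "inf (nhds c) FF \<noteq> bot"
    using cK unfolding compact_filter by blast
  show ?thesis
  proof (rule exI[of _ c], intro allI impI, rule ccontr)
    fix F \<epsilon> k0 assume F: "finite (F::'b set)" and e: "(\<epsilon>::real) > 0"
      and no: "\<not> (\<exists>k\<ge>k0. \<forall>A\<in>F. \<bar>g k A - c A\<bar> < \<epsilon>)"
    define U where "U = {h. \<forall>A\<in>F. h (id A) \<in> ball (c A) \<epsilon>}"
    have "open U" unfolding U_def
      by (rule product_topology_basis') (use F in auto)
    moreover have "c \<in> U" using e by (auto simp: U_def)
    ultimately have ev1: "eventually (\<lambda>h. h \<in> U) (nhds c)"
      by (rule eventually_nhds_in_open)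
    have ev2: "eventually (\<lambda>h. h \<notin> U) FF"
      unfolding FF_def eventually_filtermap eventually_sequentially
      using no by (auto simp: U_def dist_real_def abs_minus_commute)
    have "eventually (\<lambda>h. False) (inf (nhds c) FF)"
      unfolding eventually_inf using ev1 ev2 by blast
    with c(2) show False by (simp add: eventually_False)
  qed
qed



lemma sets_PiM_mono_sigma:
  assumes "E \<subseteq> F" "UNIV \<in> E" "finite I"
  shows "sets (PiM I (\<lambda>_. sigma (UNIV::'a set) E)) \<subseteq> sets (PiM I (\<lambda>_. sigma UNIV F))"
proof -
  have F: "UNIV \<in> F" using assms by auto
  have eq: "sets (PiM I (\<lambda>_. sigma (UNIV::'a set) E')) =
      sigma_sets (PiE I (\<lambda>_. UNIV)) {{f\<in>PiE I (\<lambda>_. UNIV). \<forall>i\<in>j. f i \<in> A i} | A j. j \<in> {I} \<and> A \<in> Pi j (\<lambda>_. E')}"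
    if "UNIV \<in> E'" for E'
  proof (subst sets_PiM_sigma[where J="{I}"])
    show "\<exists>S\<subseteq>E'. countable S \<and> UNIV = \<Union>S" for i
      using that by (intro exI[of _ "{UNIV}"]) auto
  qed (use assms(3) in \<open>auto intro!: sets_measure_of\<close>)
  show ?thesis
    unfolding eq[OF assms(2)] eq[OF F]
    by (rule sigma_sets_mono') (use assms in blast)
qed

locale th6 =
  fixes S0 :: "'a::t2_space set set"
    and P :: "(nat \<Rightarrow> 'a) measure"
    and G :: "nat \<Rightarrow> 'a set set"
    and Pk :: "nat \<Rightarrow> (nat \<Rightarrow> 'a) measure"
    and n N :: nat
  assumes alg: "algebra UNIV S0"
    and gen: "sigma_sets UNIV S0 = sets (borel :: 'a measure)"
    and n_pos: "0 < n"
    and exch: "exchangeable borel n P"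
    and tight: "\<And>\<epsilon>. \<epsilon> > 0 \<Longrightarrow> \<exists>V \<in> S0. \<exists>K. compact K \<and> V \<subseteq> K \<and>
        measure P {x \<in> space (PiM {..<n} (\<lambda>_. borel)). x 0 \<in> V} \<ge> 1 - \<epsilon>"
    and reg: "\<And>\<epsilon> V. \<epsilon> > 0 \<Longrightarrow> V \<in> S0 \<Longrightarrow> \<exists>U W. open U \<and> W \<in> S0 \<and> V \<subseteq> U \<and> U \<subseteq> W \<and>
        measure P {x \<in> space (PiM {..<n} (\<lambda>_. borel)). x 0 \<in> W - V} \<le> \<epsilon>"
    and G_sigma: "\<And>k. sigma_algebra UNIV (G k)"
    and G_inc: "\<And>k. G k \<subseteq> G (Suc k)"
    and G_union: "(\<Union>k. G k) = S0"
    and Pk_prob: "\<And>k. prob_space (Pk k)"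
    and Pk_sets: "\<And>k. sets (Pk k) = sets (PiM {..<n} (\<lambda>_. sigma UNIV (G k)))"
    and conv: "(\<lambda>k. SUP A \<in> sets (PiM {..<n} (\<lambda>_. sigma UNIV (G k))).
                  \<bar>measure (Pk k) A - measure P A\<bar>) \<longlonglongrightarrow> 0"
    and Nn: "N > n"
    and Pk_ext: "\<And>k. extendible (sigma UNIV (G k)) n N (Pk k)"
begin

definition Om :: "nat \<Rightarrow> (nat \<Rightarrow> 'a) set" where "Om m = PiE {..<m} (\<lambda>_. UNIV)"
abbreviation MG :: "nat \<Rightarrow> nat \<Rightarrow> (nat \<Rightarrow> 'a) measure" where
  "MG j m \<equiv> PiM {..<m} (\<lambda>_. sigma UNIV (G j))"
abbreviation MB :: "nat \<Rightarrow> (nat \<Rightarrow> 'a) measure" where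
  "MB m \<equiv> PiM {..<m} (\<lambda>_. borel)"
definition D :: "(nat \<Rightarrow> 'a) set set" where "D = (\<Union>j. sets (MG j N))"

lemma G_mono: "j \<le> k \<Longrightarrow> G j \<subseteq> G k"
  by (rule lift_Suc_mono_le[of G]) (use G_inc in auto)

lemma sets_sigmaG: "sets (sigma UNIV (G j)) = G j"
  using G_sigma[of j] by (simp add: sigma_algebra.sigma_sets_eq)

lemma UNIV_G: "UNIV \<in> G j"
  using G_sigma[of j] unfolding sigma_algebra_iff2 by (metis Diff_empty)

lemma G_S0: "G j \<subseteq> S0" using G_union by blast

lemma S0_borel: "S0 \<subseteq> sets borel"
  using gen by (metis sigma_sets.Basic subsetI)

lemma space_MG[simp]: "space (MG j m) = Om m"
  by (simp add: space_PiM Om_def)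

lemma space_MB[simp]: "space (MB m) = Om m"
  by (simp add: space_PiM Om_def)

lemma MG_mono: "j \<le> k \<Longrightarrow> sets (MG j m) \<subseteq> sets (MG k m)"
  by (rule sets_PiM_mono_sigma) (auto simp: G_mono UNIV_G)

lemma sets_MB_eq: "sets (MB m) = sets (PiM {..<m} (\<lambda>_. sigma UNIV S0))"
proof (rule sets_PiM_cong[OF refl])
  show "sets borel = sets (sigma UNIV S0)" for i
    using gen by (simp add: sets_measure_of)
qed

lemma UNIV_S0: "UNIV \<in> S0" using UNIV_G[of 0] G_S0 by blast

lemma MG_MB: "sets (MG j m) \<subseteq> sets (MB m)"
  unfolding sets_MB_eq by (rule sets_PiM_mono_sigma) (auto simp: G_S0 UNIV_G)

lemma finite_in_G:
  fixes m :: nat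
  assumes "\<And>l. l < m \<Longrightarrow> T l \<in> S0"
  shows "\<exists>j. \<forall>l<m. T l \<in> G j"
proof -
  have "\<forall>l<m. \<exists>j. T l \<in> G j" using assms G_union by blast
  then obtain jf where jf: "\<And>l. l < m \<Longrightarrow> T l \<in> G (jf l)" by metis
  define J where "J = Max (jf ` {..<m})"
  have "T l \<in> G J" if "l < m" for l
  proof -
    have "jf l \<le> J" unfolding J_def using that by (intro Max_ge finite_imageI) auto
    thus ?thesis using jf[OF that] G_mono[of "jf l" J] by auto
  qed
  thus ?thesis by blast
qed

lemma D_two: "A \<in> D \<Longrightarrow> B \<in> D \<Longrightarrow> \<exists>j. A \<in> sets (MG j N) \<and> B \<in> sets (MG j N)"
proof -
  assume "A \<in> D" "B \<in> D"
  then obtain i j where "A \<in> sets (MG i N)" "B \<in> sets (MG j N)" unfolding D_def by blast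
  thus ?thesis using MG_mono[of i "max i j" N] MG_mono[of j "max i j" N] by auto
qed

lemma D_Un: "A \<in> D \<Longrightarrow> B \<in> D \<Longrightarrow> A \<union> B \<in> D"
  using D_two unfolding D_def by blast
lemma D_Int: "A \<in> D \<Longrightarrow> B \<in> D \<Longrightarrow> A \<inter> B \<in> D"
  using D_two unfolding D_def by blast
lemma D_Diff: "A \<in> D \<Longrightarrow> B \<in> D \<Longrightarrow> A - B \<in> D"
  using D_two unfolding D_def by blast
lemma D_Om: "Om N \<in> D"
  unfolding D_def using sets.top[of "MG 0 N"] by auto
lemma D_empty: "{} \<in> D"
  unfolding D_def by auto
lemma D_sub: "A \<in> D \<Longrightarrow> A \<subseteq> Om N"
  unfolding D_def using sets.sets_into_space by fastforce
lemma D_MB: "D \<subseteq> sets (MB N)"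
  unfolding D_def using MG_MB by blast

end


lemma real_eq_eps:
  fixes x y :: real
  assumes "\<And>e. e > 0 \<Longrightarrow> \<bar>x - y\<bar> < e"
  shows "x = y"
proof (rule ccontr)
  assume "x \<noteq> y"
  hence "\<bar>x - y\<bar> > 0" by auto
  from assms[OF this] show False by simp
qed

lemma abs3: fixes a b d x y z e :: real
  assumes "\<bar>a - x\<bar> < e/3" "\<bar>b - y\<bar> < e/3" "\<bar>d - z\<bar> < e/3" "d = a + b" shows "\<bar>z - (x + y)\<bar> < e"
  using assms unfolding abs_less_iff by auto
lemma abs2: fixes a b x y e :: real
  assumes "\<bar>a - x\<bar> < e/2" "\<bar>b - y\<bar> < e/2" "a = b" shows "\<bar>y - x\<bar> < e"
  using assms unfolding abs_less_iff by auto

context th6 begin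

definition Q :: "nat \<Rightarrow> (nat \<Rightarrow> 'a) measure" where
  "Q k = (SOME Q. exchangeable (sigma UNIV (G k)) N Q \<and>
        (\<forall>A \<in> sets (MG k n). measure (Pk k) A = measure Q {x \<in> space (MG k N). restrict x {..<n} \<in> A}))"

lemma Q_ex: "exchangeable (sigma UNIV (G k)) N (Q k) \<and>
        (\<forall>A \<in> sets (MG k n). measure (Pk k) A = measure (Q k) {x \<in> space (MG k N). restrict x {..<n} \<in> A})"
  unfolding Q_def
  by (rule someI_ex) (use Pk_ext[of k] in \<open>simp add: extendible_def\<close>)

lemma Q_prob: "prob_space (Q k)" and Q_sets: "sets (Q k) = sets (MG k N)"
  and Q_perm: "\<pi> permutes {..<N} \<Longrightarrow> distr (Q k) (MG k N) (\<lambda>x. \<lambda>i\<in>{..<N}. x (\<pi> i)) = Q k"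
  using Q_ex[of k] unfolding exchangeable_def by auto

lemma Q_marg: "A \<in> sets (MG k n) \<Longrightarrow>
    measure (Pk k) A = measure (Q k) {x \<in> Om N. restrict x {..<n} \<in> A}"
  using Q_ex[of k] by auto

lemma Q_space: "space (Q k) = Om N"
  using sets_eq_imp_space_eq[OF Q_sets[of k]] by simp

definition c :: "(nat \<Rightarrow> 'a) set \<Rightarrow> real" where
  "c = (SOME c. \<forall>F \<epsilon> k0. finite F \<longrightarrow> \<epsilon> > 0 \<longrightarrow> (\<exists>k\<ge>k0. \<forall>A\<in>F. \<bar>measure (Q k) A - c A\<bar> < \<epsilon>))"

lemma cp: "finite F \<Longrightarrow> \<epsilon> > 0 \<Longrightarrow> \<exists>k\<ge>k0. \<forall>A\<in>F. \<bar>measure (Q k) A - c A\<bar> < \<epsilon>"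
proof -
  have "\<exists>c. \<forall>F \<epsilon> k0. finite F \<longrightarrow> \<epsilon> > 0 \<longrightarrow> (\<exists>k\<ge>k0. \<forall>A\<in>F. \<bar>measure (Q k) A - c A\<bar> < \<epsilon>)"
  proof (rule cluster_point)
    fix k A show "measure (Q k) A \<in> {0..1}"
      using prob_space.prob_le_1[OF Q_prob[of k]] by simp
  qed
  from someI_ex[OF this] show "finite F \<Longrightarrow> \<epsilon> > 0 \<Longrightarrow> \<exists>k\<ge>k0. \<forall>A\<in>F. \<bar>measure (Q k) A - c A\<bar> < \<epsilon>"
    unfolding c_def[symmetric] by blast
qed

lemma D_Q: "A \<in> D \<Longrightarrow> \<exists>j. \<forall>k\<ge>j. A \<in> sets (Q k)"
  unfolding D_def Q_sets using MG_mono by blast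

lemma c_nonneg: "0 \<le> c A"
proof (rule ccontr)
  assume "\<not> 0 \<le> c A"
  then obtain k where "\<bar>measure (Q k) A - c A\<bar> < - c A" using cp[of "{A}" "- c A" 0] by auto
  thus False by (smt (verit) measure_nonneg)
qed

lemma c_le1: "c A \<le> 1"
proof (rule ccontr)
  assume "\<not> c A \<le> 1"
  then obtain k where "\<bar>measure (Q k) A - c A\<bar> < c A - 1" using cp[of "{A}" "c A - 1" 0] by auto
  thus False using prob_space.prob_le_1[OF Q_prob[of k], of A] by linarith
qed

lemma c_Om: "c (Om N) = 1"
proof (rule real_eq_eps)
  fix e :: real assume "e > 0"
  then obtain k where "\<bar>measure (Q k) (Om N) - c (Om N)\<bar> < e" using cp[of "{Om N}" e 0] by auto
  moreover have "measure (Q k) (Om N) = 1"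
    using prob_space.prob_space[OF Q_prob[of k]] Q_space by simp
  ultimately show "\<bar>c (Om N) - 1\<bar> < e" by simp
qed

lemma c_add:
  assumes A: "A \<in> D" and B: "B \<in> D" and dis: "A \<inter> B = {}"
  shows "c (A \<union> B) = c A + c B"
proof (rule real_eq_eps)
  fix e :: real assume e: "e > 0"
  obtain j where j: "\<forall>k\<ge>j. A \<in> sets (Q k)" "\<forall>k\<ge>j. B \<in> sets (Q k)"
    using D_Q[OF A] D_Q[OF B] by (metis max.cobounded1 max.cobounded2 order.trans)
  obtain k where k: "k \<ge> j" "\<forall>X\<in>{A, B, A \<union> B}. \<bar>measure (Q k) X - c X\<bar> < e/3"
    using cp[of "{A, B, A \<union> B}" "e/3" j] e by auto
  have "measure (Q k) (A \<union> B) = measure (Q k) A + measure (Q k) B"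
    using j k(1) dis prob_space.finite_measure[OF Q_prob[of k]]
    by (intro finite_measure.finite_measure_Union) auto
  moreover have "\<bar>measure (Q k) A - c A\<bar> < e/3" "\<bar>measure (Q k) B - c B\<bar> < e/3"
    "\<bar>measure (Q k) (A \<union> B) - c (A \<union> B)\<bar> < e/3" using k(2) by auto
  ultimately show "\<bar>c (A \<union> B) - (c A + c B)\<bar> < e" by (intro abs3[of _ _ e]) auto
qed

lemma c_perm:
  assumes pi: "\<pi> permutes {..<N}" and A: "A \<in> D"
  shows "{x \<in> Om N. (\<lambda>i\<in>{..<N}. x (\<pi> i)) \<in> A} \<in> D" (is "?B \<in> D")
    and "c {x \<in> Om N. (\<lambda>i\<in>{..<N}. x (\<pi> i)) \<in> A} = c A"
proof -
  have meas: "(\<lambda>x. \<lambda>i\<in>{..<N}. x (\<pi> i)) \<in> measurable (MG k N) (MG k N)" for k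
    by (rule measurable_restrict, rule measurable_component_singleton)
       (use permutes_in_image[OF pi] in auto)
  have B: "?B = (\<lambda>x. \<lambda>i\<in>{..<N}. x (\<pi> i)) -` A \<inter> space (MG k N)" for k by auto
  have Bs: "?B \<in> sets (MG k N)" if "A \<in> sets (MG k N)" for k
    unfolding B[of k] by (rule measurable_sets[OF meas that])
  show "?B \<in> D" using A Bs unfolding D_def by blast
  show "c ?B = c A"
  proof (rule real_eq_eps)
    fix e :: real assume e: "e > 0"
    obtain j where j: "\<forall>k\<ge>j. A \<in> sets (Q k)" using D_Q[OF A] by blast
    obtain k where k: "k \<ge> j" "\<forall>X\<in>{A, ?B}. \<bar>measure (Q k) X - c X\<bar> < e/2"
      using cp[of "{A, ?B}" "e/2" j] e by auto
    have AQ: "A \<in> sets (MG k N)" using j k(1) Q_sets by auto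
    have "measure (Q k) A = measure (distr (Q k) (MG k N) (\<lambda>x. \<lambda>i\<in>{..<N}. x (\<pi> i))) A"
      using Q_perm[OF pi, of k] by simp
    also have "\<dots> = measure (Q k) ((\<lambda>x. \<lambda>i\<in>{..<N}. x (\<pi> i)) -` A \<inter> space (Q k))"
    proof (rule measure_distr[OF _ AQ])
      show "(\<lambda>x. \<lambda>i\<in>{..<N}. x (\<pi> i)) \<in> measurable (Q k) (MG k N)"
        using meas[of k] measurable_cong_sets[OF Q_sets[of k] refl] by blast
    qed
    also have "(\<lambda>x. \<lambda>i\<in>{..<N}. x (\<pi> i)) -` A \<inter> space (Q k) = ?B"
      unfolding Q_space by blast
    finally have "measure (Q k) A = measure (Q k) ?B" .
    moreover have "\<bar>measure (Q k) A - c A\<bar> < e/2" "\<bar>measure (Q k) ?B - c ?B\<bar> < e/2"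
      using k(2) by auto
    ultimately show "\<bar>c ?B - c A\<bar> < e" by (intro abs2[of _ _ e]) auto
  qed
qed

end


context th6 begin

lemma P_prob: "prob_space P" and P_sets: "sets P = sets (MB n)"
  using exch unfolding exchangeable_def by auto

lemma P_space: "space P = Om n"
  using sets_eq_imp_space_eq[OF P_sets] by simp

lemma c_marg:
  assumes A: "A \<in> sets (MG j n)"
  shows "{x \<in> Om N. restrict x {..<n} \<in> A} \<in> D" (is "?B \<in> D")
    and "c {x \<in> Om N. restrict x {..<n} \<in> A} = measure P A"
proof -
  have meas: "(\<lambda>f. restrict f {..<n}) \<in> measurable (MG k N) (MG k n)" for k
    by (rule measurable_restrict_subset) (use Nn in auto)
  have B: "?B = (\<lambda>f. restrict f {..<n}) -` A \<inter> space (MG k N)" for k by auto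
  have Bs: "?B \<in> sets (MG j N)"
    unfolding B[of j] by (rule measurable_sets[OF meas A])
  show "?B \<in> D" using Bs unfolding D_def by blast
  show "c ?B = measure P A"
  proof (rule real_eq_eps)
    fix e :: real assume e: "e > 0"
    obtain k1 where k1: "\<And>k. k \<ge> k1 \<Longrightarrow>
       norm ((SUP A \<in> sets (MG k n). \<bar>measure (Pk k) A - measure P A\<bar>) - 0) < e/2"
      using conv[unfolded LIMSEQ_iff, rule_format, of "e/2"] e by auto
    obtain k where k: "k \<ge> max j k1" "\<bar>measure (Q k) ?B - c ?B\<bar> < e/2"
      using cp[of "{?B}" "e/2" "max j k1"] e by auto
    have Ak: "A \<in> sets (MG k n)" using MG_mono[of j k n] A k(1) by auto
    have eq: "measure (Pk k) A = measure (Q k) ?B" using Q_marg[OF Ak] .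
    have "\<bar>measure (Pk k) A - measure P A\<bar> \<le> (SUP A \<in> sets (MG k n). \<bar>measure (Pk k) A - measure P A\<bar>)"
    proof (rule cSUP_upper[OF Ak])
      show "bdd_above ((\<lambda>A. \<bar>measure (Pk k) A - measure P A\<bar>) ` sets (MG k n))"
      proof (rule bdd_aboveI2)
        fix X
        have "measure (Pk k) X \<le> 1" using prob_space.prob_le_1[OF Pk_prob[of k]] .
        moreover have "measure P X \<le> 1" using prob_space.prob_le_1[OF P_prob] .
        ultimately show "\<bar>measure (Pk k) X - measure P X\<bar> \<le> 2"
          using measure_nonneg[of "Pk k" X] measure_nonneg[of P X] by linarith
      qed
    qed
    moreover have "(SUP A \<in> sets (MG k n). \<bar>measure (Pk k) A - measure P A\<bar>) < e/2"
      using k1[of k] k(1) by auto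
    ultimately have "\<bar>measure (Pk k) A - measure P A\<bar> < e/2" by linarith
    thus "\<bar>c ?B - measure P A\<bar> < e"
      using k(2) eq unfolding abs_less_iff by auto
  qed
qed

lemma c_empty: "c {} = 0"
  using c_add[OF D_empty D_empty] by simp

lemma c_mono: "A \<in> D \<Longrightarrow> B \<in> D \<Longrightarrow> A \<subseteq> B \<Longrightarrow> c A \<le> c B"
  using c_add[of A "B - A"] D_Diff[of B A] c_nonneg[of "B - A"]
  by (simp add: Un_absorb1 Int_Diff)

lemma c_subadd: "A \<in> D \<Longrightarrow> B \<in> D \<Longrightarrow> c (A \<union> B) \<le> c A + c B"
proof -
  assume A: "A \<in> D" and B: "B \<in> D"
  have "A \<union> B = A \<union> (B - A)" by auto
  hence "c (A \<union> B) = c A + c (B - A)" using c_add[OF A D_Diff[OF B A]] by auto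
  moreover have "c (B - A) \<le> c B" using c_mono[OF D_Diff[OF B A] B] by auto
  ultimately show ?thesis by simp
qed

lemma c_sub_le: "A \<in> D \<Longrightarrow> B \<in> D \<Longrightarrow> C \<in> D \<Longrightarrow> A \<subseteq> B \<union> C \<Longrightarrow> c A \<le> c B + c C"
  by (meson D_Un c_mono c_subadd order_trans)

lemma D_finUN:
  fixes m :: nat
  shows "(\<And>l. l \<le> m \<Longrightarrow> A l \<in> D) \<Longrightarrow> (\<Union>l\<le>m. A l) \<in> D"
  by (induction m) (auto simp: atMost_Suc D_Un)

lemma D_finINT:
  fixes m :: nat
  shows "(\<And>l. l \<le> m \<Longrightarrow> A l \<in> D) \<Longrightarrow> (\<Inter>l\<le>m. A l) \<in> D"
  by (induction m) (auto simp: atMost_Suc D_Int)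

lemma c_finUN:
  fixes m :: nat
  shows "(\<And>l. l \<le> m \<Longrightarrow> A l \<in> D) \<Longrightarrow> c (\<Union>l\<le>m. A l) \<le> (\<Sum>l\<le>m. c (A l))"
proof (induction m)
  case 0 thus ?case by simp
next
  case (Suc m)
  have "c (\<Union>l\<le>Suc m. A l) = c (A (Suc m) \<union> (\<Union>l\<le>m. A l))" by (simp add: atMost_Suc)
  also have "\<dots> \<le> c (A (Suc m)) + c (\<Union>l\<le>m. A l)"
    using Suc.prems D_finUN[of m A] by (intro c_subadd) auto
  finally show ?case using Suc by simp
qed

lemma c_finUN_lt:
  fixes m :: nat
  shows "(\<And>l. l < m \<Longrightarrow> A l \<in> D) \<Longrightarrow> c (\<Union>l<m. A l) \<le> (\<Sum>l<m. c (A l))"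
proof (cases m)
  case 0 thus ?thesis by (simp add: c_empty)
next
  case (Suc m')
  assume "\<And>l. l < m \<Longrightarrow> A l \<in> D"
  thus ?thesis using c_finUN[of m' A] unfolding Suc lessThan_Suc_atMost by auto
qed

end


lemma Hausdorff_euclidean_t2: "Hausdorff_space (euclidean :: 'a::t2_space topology)"
  unfolding Hausdorff_space_def disjnt_def by (metis separation_t2 open_openin topspace_euclidean)

context th6 begin

definition pre :: "'a set \<Rightarrow> (nat \<Rightarrow> 'a) set" where "pre E = {x \<in> Om n. x 0 \<in> E}"
definition p :: "'a set \<Rightarrow> real" where "p E = measure P (pre E)"

lemma pre_sets: "E \<in> sets borel \<Longrightarrow> pre E \<in> sets P"
proof -
  assume E: "E \<in> sets borel"
  have "(\<lambda>x. x 0) \<in> measurable (MB n) borel"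
    by (rule measurable_component_singleton) (use n_pos in auto)
  hence "(\<lambda>x. x 0) -` E \<inter> space (MB n) \<in> sets (MB n)" using E by (rule measurable_sets)
  moreover have "(\<lambda>x. x 0) -` E \<inter> space (MB n) = pre E" by (auto simp: pre_def)
  ultimately show ?thesis using P_sets by simp
qed

lemma S0_algebra: "algebra UNIV S0" by (rule alg)

lemma S0_Diff: "A \<in> S0 \<Longrightarrow> B \<in> S0 \<Longrightarrow> A - B \<in> S0"
  using algebra.axioms(1)[OF alg] ring_of_sets.Diff by blast
lemma S0_Int: "A \<in> S0 \<Longrightarrow> B \<in> S0 \<Longrightarrow> A \<inter> B \<in> S0"
proof -
  assume "A \<in> S0" "B \<in> S0"
  hence "A - (A - B) \<in> S0" by (intro S0_Diff)
  moreover have "A - (A - B) = A \<inter> B" by auto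
  ultimately show ?thesis by simp
qed

lemma p_le: "E \<in> sets borel \<Longrightarrow> E1 \<in> sets borel \<Longrightarrow> E2 \<in> sets borel \<Longrightarrow> E \<subseteq> E1 \<union> E2
   \<Longrightarrow> p E \<le> p E1 + p E2"
proof -
  assume E: "E \<in> sets borel" "E1 \<in> sets borel" "E2 \<in> sets borel" "E \<subseteq> E1 \<union> E2"
  interpret P: prob_space P by (rule P_prob)
  have "pre E \<subseteq> pre E1 \<union> pre E2" using E(4) by (auto simp: pre_def)
  hence "measure P (pre E) \<le> measure P (pre E1 \<union> pre E2)"
    using pre_sets E by (intro P.finite_measure_mono) auto
  also have "\<dots> \<le> measure P (pre E1) + measure P (pre E2)"
    using pre_sets E by (intro measure_Un_le) auto
  finally show ?thesis by (simp add: p_def)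
qed

lemma p_compl: "E \<in> sets borel \<Longrightarrow> p (UNIV - E) = 1 - p E"
proof -
  assume E: "E \<in> sets borel"
  interpret P: prob_space P by (rule P_prob)
  have "pre (UNIV - E) = space P - pre E" by (auto simp: pre_def P_space)
  thus ?thesis using P.prob_compl[OF pre_sets[OF E]] by (simp add: p_def)
qed

lemma approx1:
  assumes V: "V \<in> S0" and e: "e > 0"
  shows "\<exists>T\<in>S0. \<exists>K. compact K \<and> T \<subseteq> K \<and> K \<subseteq> V \<and> p (V - T) \<le> e"
proof -
  obtain V' K' where V': "V' \<in> S0" "compact K'" "V' \<subseteq> K'" "p V' \<ge> 1 - e/2"
    using tight[of "e/2"] e by (auto simp: p_def pre_def)
  have cV: "UNIV - V \<in> S0" using S0_Diff[OF UNIV_S0 V] .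
  obtain U W where UW: "open U" "W \<in> S0" "UNIV - V \<subseteq> U" "U \<subseteq> W"
      "p (W - (UNIV - V)) \<le> e/2"
    using reg[OF _ cV, of "e/2"] e by (auto simp: p_def pre_def)
  define T where "T = V' \<inter> (UNIV - W)"
  define K where "K = K' \<inter> (UNIV - U)"
  have T: "T \<in> S0" unfolding T_def using S0_Int[OF V'(1) S0_Diff[OF UNIV_S0 UW(2)]] .
  have "compact K" unfolding K_def using V'(2) UW(1) by (intro compact_Int_closed) auto
  moreover have "T \<subseteq> K" using V'(3) UW(4) by (auto simp: T_def K_def)
  moreover have "K \<subseteq> V" using UW(3) by (auto simp: K_def)
  moreover have "p (V - T) \<le> e"
  proof -
    have b: "X \<in> S0 \<Longrightarrow> X \<in> sets borel" for X using S0_borel by auto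
    have "p (V - T) \<le> p (UNIV - V') + p (W - (UNIV - V))"
      by (rule p_le) (auto simp: T_def intro!: b S0_Diff V UNIV_S0 V'(1) UW(2) T[unfolded T_def])
    also have "\<dots> \<le> e" using p_compl[OF b[OF V'(1)]] V'(4) UW(5) by linarith
    finally show ?thesis .
  qed
  ultimately show ?thesis using T by blast
qed

definition cyl :: "nat \<Rightarrow> 'a set \<Rightarrow> (nat \<Rightarrow> 'a) set" where "cyl i V = {x \<in> Om N. x i \<in> V}"

lemma c_cyl:
  assumes i: "i < N" and V: "V \<in> S0"
  shows "cyl i V \<in> D" and "c (cyl i V) = p V"
proof -
  obtain j where j: "V \<in> G j" using V G_union by blast
  have "(\<lambda>x. x 0) \<in> measurable (MG j n) (sigma UNIV (G j))"
    by (rule measurable_component_singleton) (use n_pos in auto)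
  hence "(\<lambda>x. x 0) -` V \<inter> space (MG j n) \<in> sets (MG j n)"
    using j sets_sigmaG by (intro measurable_sets) auto
  moreover have "(\<lambda>x. x 0) -` V \<inter> space (MG j n) = pre V" by (auto simp: pre_def)
  ultimately have A0: "pre V \<in> sets (MG j n)" by simp
  have eq0: "{x \<in> Om N. restrict x {..<n} \<in> pre V} = cyl 0 V"
    using n_pos by (auto simp: pre_def cyl_def Om_def)
  have D0: "cyl 0 V \<in> D" and c0: "c (cyl 0 V) = p V"
    using c_marg[OF A0] unfolding eq0 p_def by auto
  have pi: "Transposition.transpose 0 i permutes {..<N}" using i Nn by (intro permutes_swap_id) auto
  have eq1: "{x \<in> Om N. (\<lambda>l\<in>{..<N}. x (Transposition.transpose 0 i l)) \<in> cyl 0 V} = cyl i V"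
    using Nn by (auto simp: cyl_def Om_def)
  show "cyl i V \<in> D" using c_perm(1)[OF pi D0] unfolding eq1 .
  show "c (cyl i V) = p V" using c_perm(2)[OF pi D0] c0 unfolding eq1 by simp
qed

end


context th6 begin

abbreviation PT :: "(nat \<Rightarrow> 'a) topology" where
  "PT \<equiv> product_topology (\<lambda>_. euclidean) {..<N}"

lemma Haus_PT: "Hausdorff_space PT"
  using Hausdorff_space_product_topology Hausdorff_euclidean_t2 by blast

definition Approx :: "(nat \<Rightarrow> 'a) set \<Rightarrow> bool" where
  "Approx A \<longleftrightarrow> A \<in> D \<and> (\<forall>e>0. \<exists>B\<in>D. \<exists>C. B \<subseteq> C \<and> C \<subseteq> A \<and> compactin PT C \<and> c (A - B) \<le> e)"

lemma D_finUN_lt: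
  fixes m :: nat
  shows "(\<And>l. l < m \<Longrightarrow> A l \<in> D) \<Longrightarrow> (\<Union>l<m. A l) \<in> D"
  by (induction m) (auto simp: lessThan_Suc D_Un D_empty)

lemma rect_D:
  assumes V: "\<And>l. l < N \<Longrightarrow> V l \<in> S0"
  shows "PiE {..<N} V \<in> D"
proof -
  obtain j where j: "\<forall>l<N. V l \<in> G j" using finite_in_G[of N V] V by blast
  have "PiE {..<N} V \<in> sets (MG j N)"
    by (rule sets_PiM_I_finite) (use j sets_sigmaG in auto)
  thus ?thesis unfolding D_def by blast
qed

lemma rect_approx:
  assumes V: "\<And>l. l < N \<Longrightarrow> V l \<in> S0"
  shows "Approx (PiE {..<N} V)"
  unfolding Approx_def
proof (intro conjI allI impI)
  show "PiE {..<N} V \<in> D" by (rule rect_D[OF V])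
  fix e :: real assume e: "e > 0"
  have N0: "real N > 0" using Nn by auto
  have eN: "e / N > 0" using e N0 by simp
  have "\<forall>l\<in>{..<N}. \<exists>T. T \<in> S0 \<and> (\<exists>K. compact K \<and> T \<subseteq> K \<and> K \<subseteq> V l \<and> p (V l - T) \<le> e / N)"
  proof
    fix l assume "l \<in> {..<N}"
    hence "V l \<in> S0" using V by auto
    from approx1[OF this eN] show "\<exists>T. T \<in> S0 \<and> (\<exists>K. compact K \<and> T \<subseteq> K \<and> K \<subseteq> V l \<and> p (V l - T) \<le> e / N)"
      by blast
  qed
  from bchoice[OF this] obtain T where T: "\<forall>l\<in>{..<N}. T l \<in> S0 \<and>
      (\<exists>K. compact K \<and> T l \<subseteq> K \<and> K \<subseteq> V l \<and> p (V l - T l) \<le> e / N)" by blast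
  hence "\<forall>l\<in>{..<N}. \<exists>K. compact K \<and> T l \<subseteq> K \<and> K \<subseteq> V l \<and> p (V l - T l) \<le> e / N" by blast
  from bchoice[OF this] obtain K where K: "\<forall>l\<in>{..<N}. compact (K l) \<and> T l \<subseteq> K l \<and> K l \<subseteq> V l \<and>
      p (V l - T l) \<le> e / N" by blast
  define B where "B = PiE {..<N} T"
  define C where "C = PiE {..<N} K"
  have BD: "B \<in> D" unfolding B_def using T by (intro rect_D) auto
  have BC: "B \<subseteq> C" unfolding B_def C_def using K by (intro PiE_mono) auto
  have CA: "C \<subseteq> PiE {..<N} V" unfolding C_def using K by (intro PiE_mono) auto
  have cC: "compactin PT C" unfolding C_def compactin_PiE using K by auto
  have VT: "V l - T l \<in> S0" if "l < N" for l using S0_Diff V T that by auto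
  have sub: "PiE {..<N} V - B \<subseteq> (\<Union>l<N. cyl l (V l - T l))"
    by (auto simp: B_def cyl_def Om_def PiE_iff)
  have "c (PiE {..<N} V - B) \<le> c (\<Union>l<N. cyl l (V l - T l))"
    by (rule c_mono[OF D_Diff[OF rect_D[OF V] BD] D_finUN_lt sub])
       (use c_cyl(1)[OF _ VT] in auto)
  also have "\<dots> \<le> (\<Sum>l<N. c (cyl l (V l - T l)))"
    by (rule c_finUN_lt) (use c_cyl(1)[OF _ VT] in auto)
  also have "\<dots> = (\<Sum>l<N. p (V l - T l))"
    by (rule sum.cong) (use c_cyl(2)[OF _ VT] in auto)
  also have "\<dots> \<le> (\<Sum>l<N. e / N)"
    by (rule sum_mono) (use K in auto)
  also have "\<dots> = e" using N0 by simp
  finally show "\<exists>B\<in>D. \<exists>C. B \<subseteq> C \<and> C \<subseteq> PiE {..<N} V \<and> compactin PT C \<and> c (PiE {..<N} V - B) \<le> e"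
    using BD BC CA cC by blast
qed

lemma Approx_empty: "Approx {}"
  unfolding Approx_def using D_empty c_empty by (auto intro!: exI[of _ "{}"])

lemma Approx_Un:
  assumes A: "Approx A" and A': "Approx A'"
  shows "Approx (A \<union> A')"
  unfolding Approx_def
proof (intro conjI allI impI)
  show "A \<union> A' \<in> D" using A A' D_Un by (auto simp: Approx_def)
  fix e :: real assume e: "e > 0"
  obtain B C where BC: "B \<in> D" "B \<subseteq> C" "C \<subseteq> A" "compactin PT C" "c (A - B) \<le> e/2"
    using A e unfolding Approx_def by (meson half_gt_zero)
  obtain B' C' where BC': "B' \<in> D" "B' \<subseteq> C'" "C' \<subseteq> A'" "compactin PT C'" "c (A' - B') \<le> e/2"
    using A' e unfolding Approx_def by (meson half_gt_zero)
  have AD: "A \<in> D" "A' \<in> D" using A A' by (auto simp: Approx_def)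
  have "c ((A \<union> A') - (B \<union> B')) \<le> c (A - B) + c (A' - B')"
    by (rule c_sub_le) (use AD BC BC' in \<open>auto intro: D_Diff D_Un\<close>)
  thus "\<exists>B\<in>D. \<exists>C. B \<subseteq> C \<and> C \<subseteq> A \<union> A' \<and> compactin PT C \<and> c (A \<union> A' - B) \<le> e"
    using BC BC' by (intro bexI[of _ "B \<union> B'"] exI[of _ "C \<union> C'"]) (auto intro: D_Un compactin_Un)
qed

lemma Approx_Int:
  assumes A: "Approx A" and A': "Approx A'"
  shows "Approx (A \<inter> A')"
  unfolding Approx_def
proof (intro conjI allI impI)
  show "A \<inter> A' \<in> D" using A A' D_Int by (auto simp: Approx_def)
  fix e :: real assume e: "e > 0"
  obtain B C where BC: "B \<in> D" "B \<subseteq> C" "C \<subseteq> A" "compactin PT C" "c (A - B) \<le> e/2"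
    using A e unfolding Approx_def by (meson half_gt_zero)
  obtain B' C' where BC': "B' \<in> D" "B' \<subseteq> C'" "C' \<subseteq> A'" "compactin PT C'" "c (A' - B') \<le> e/2"
    using A' e unfolding Approx_def by (meson half_gt_zero)
  have AD: "A \<in> D" "A' \<in> D" using A A' by (auto simp: Approx_def)
  have "c ((A \<inter> A') - (B \<inter> B')) \<le> c (A - B) + c (A' - B')"
    by (rule c_sub_le) (use AD BC BC' in \<open>auto intro: D_Diff D_Int\<close>)
  moreover have "compactin PT (C \<inter> C')"
    by (rule closed_Int_compactin[OF compactin_imp_closedin[OF Haus_PT BC(4)] BC'(4)])
  ultimately show "\<exists>B\<in>D. \<exists>C. B \<subseteq> C \<and> C \<subseteq> A \<inter> A' \<and> compactin PT C \<and> c (A \<inter> A' - B) \<le> e"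
    using BC BC' by (intro bexI[of _ "B \<inter> B'"] exI[of _ "C \<inter> C'"]) (auto intro: D_Int)
qed

lemma Approx_finUN:
  fixes m :: nat
  shows "(\<And>l. l < m \<Longrightarrow> Approx (A l)) \<Longrightarrow> Approx (\<Union>l<m. A l)"
  by (induction m) (auto simp: lessThan_Suc Approx_empty Approx_Un)

definition Good :: "(nat \<Rightarrow> 'a) set set" where
  "Good = {A. Approx A \<and> Approx (Om N - A)}"

lemma Approx_sub: "Approx A \<Longrightarrow> A \<subseteq> Om N"
  using D_sub by (auto simp: Approx_def)

lemma Om_rect: "Om N = PiE {..<N} (\<lambda>_. UNIV)" by (simp add: Om_def)

lemma Good_algebra: "algebra (Om N) Good"
  unfolding algebra_iff_Un
proof (intro conjI ballI)
  show "Good \<subseteq> Pow (Om N)" using Approx_sub by (auto simp: Good_def)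
  show "{} \<in> Good" unfolding Good_def
    using Approx_empty rect_approx[of "\<lambda>_. UNIV"] UNIV_S0 by (simp add: Om_rect)
  fix A assume A: "A \<in> Good"
  hence "Om N - (Om N - A) = A" using Approx_sub by (auto simp: Good_def)
  thus "Om N - A \<in> Good" using A by (auto simp: Good_def)
  fix B assume B: "B \<in> Good"
  have "Om N - (A \<union> B) = (Om N - A) \<inter> (Om N - B)" by auto
  thus "A \<union> B \<in> Good" using A B by (auto simp: Good_def intro: Approx_Un Approx_Int)
qed

lemma rect_Good:
  assumes V: "\<And>l. l < N \<Longrightarrow> V l \<in> S0"
  shows "PiE {..<N} V \<in> Good"
proof -
  have "Om N - PiE {..<N} V = (\<Union>l<N. PiE {..<N} (\<lambda>m. if m = l then UNIV - V l else UNIV))"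
proof (intro equalityI subsetI)
  fix x assume x: "x \<in> Om N - PiE {..<N} V"
  hence xe: "x \<in> extensional {..<N}" by (simp add: Om_def PiE_def)
  from x obtain l where l: "l < N" "x l \<notin> V l" using xe by (auto simp: Om_def PiE_def Pi_def)
  hence "x \<in> PiE {..<N} (\<lambda>m. if m = l then UNIV - V l else UNIV)" using xe by (auto simp: PiE_def Pi_def)
  thus "x \<in> (\<Union>l<N. PiE {..<N} (\<lambda>m. if m = l then UNIV - V l else UNIV))" using l by blast
next
  fix x assume "x \<in> (\<Union>l<N. PiE {..<N} (\<lambda>m. if m = l then UNIV - V l else UNIV))"
  then obtain l where l: "l < N" "x \<in> PiE {..<N} (\<lambda>m. if m = l then UNIV - V l else UNIV)" by blast
  hence "x l \<notin> V l" "x \<in> extensional {..<N}" by (auto simp: PiE_def Pi_def)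
  thus "x \<in> Om N - PiE {..<N} V" using l by (auto simp: Om_def PiE_def Pi_def)
qed
  moreover have "Approx (\<Union>l<N. PiE {..<N} (\<lambda>m. if m = l then UNIV - V l else UNIV))"
    by (intro Approx_finUN rect_approx) (auto simp: UNIV_S0 S0_Diff V)
  ultimately show ?thesis using rect_approx[OF V] by (simp add: Good_def)
qed

end


lemma geom_half: "(\<Sum>l\<le>m. (1/2::real) ^ Suc l) = 1 - (1/2) ^ Suc m"
  by (induction m) (auto simp: field_simps)

context th6 begin

lemma Good_D: "A \<in> Good \<Longrightarrow> A \<in> D" and Good_Approx: "A \<in> Good \<Longrightarrow> Approx A"
  by (auto simp: Good_def Approx_def)

lemma nested_compact:
  fixes C :: "nat \<Rightarrow> (nat \<Rightarrow> 'a) set"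
  assumes C: "\<And>l. compactin PT (C l)" and ne: "\<And>m. (\<Inter>l\<le>m. C l) \<noteq> {}"
  shows "(\<Inter>l. C l) \<noteq> {}"
proof -
  let ?X = "subtopology PT (C 0)"
  have cs: "compact_space ?X" by (rule compact_space_subtopology[OF C])
  let ?U = "range (\<lambda>l. C l \<inter> C 0)"
  have "\<Inter>?U \<noteq> {}"
  proof (rule cs[unfolded compact_space_fip, rule_format], intro conjI allI impI ballI)
    fix X assume "X \<in> ?U"
    then obtain l where X: "X = C l \<inter> C 0" by auto
    show "closedin ?X X" unfolding X closedin_subtopology
      using compactin_imp_closedin[OF Haus_PT C] by blast
  next
    fix F assume F: "finite F \<and> F \<subseteq> ?U"
    then obtain I where I: "finite I" "F = (\<lambda>l. C l \<inter> C 0) ` I"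
      by (meson finite_subset_image)
    define m where "m = Max (insert 0 I)"
    have "l \<le> m" if "l \<in> I" for l using I(1) that by (auto simp: m_def)
    hence "(\<Inter>l\<le>m. C l) \<subseteq> \<Inter>F" using I(2) by auto
    thus "\<Inter>F \<noteq> {}" using ne[of m] by auto
  qed
  thus ?thesis by auto
qed

lemma cont_Good:
  assumes A: "range A \<subseteq> Good" and dec: "decseq A" and emp: "(\<Inter>i. A i) = {}"
  shows "(\<lambda>i. c (A i)) \<longlonglongrightarrow> 0"
proof -
  have AD: "A i \<in> D" for i using A Good_D by auto
  have small: "\<exists>m. c (A m) < d" if d: "d > 0" for d
  proof (rule ccontr)
    assume "\<not> (\<exists>m. c (A m) < d)"
    hence big: "c (A m) \<ge> d" for m by (simp add: not_less)
    define Pr where "Pr m BC \<longleftrightarrow> fst BC \<in> D \<and> fst BC \<subseteq> snd BC \<and> snd BC \<subseteq> A m \<and>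
        compactin PT (snd BC) \<and> c (A m - fst BC) \<le> d/2 * (1/2)^Suc m" for m BC
    have ex: "\<exists>BC. Pr m BC" for m
    proof -
      have pos: "d/2 * (1/2)^Suc m > 0" using d by simp
      have ap: "Approx (A m)" using Good_Approx[of "A m"] A by auto
      have "\<forall>e>0. \<exists>B\<in>D. \<exists>C. B \<subseteq> C \<and> C \<subseteq> A m \<and> compactin PT C \<and> c (A m - B) \<le> e"
        using ap unfolding Approx_def by (elim conjE)
      from this[rule_format, OF pos] obtain B C where
        "B \<in> D" "B \<subseteq> C" "C \<subseteq> A m" "compactin PT C" "c (A m - B) \<le> d/2 * (1/2)^Suc m"
        by metis
      thus ?thesis unfolding Pr_def by (intro exI[of _ "(B, C)"]) simp
    qed
    define B where "B m = fst (SOME BC. Pr m BC)" for m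
    define C where "C m = snd (SOME BC. Pr m BC)" for m
    have PrBC: "Pr m (B m, C m)" for m
      using someI_ex[OF ex[of m]] unfolding B_def C_def by simp
    have B: "\<And>m. B m \<in> D" using PrBC unfolding Pr_def by auto
    have C: "\<And>m. B m \<subseteq> C m" "\<And>m. C m \<subseteq> A m"
      "\<And>m. compactin PT (C m)" "\<And>m. c (A m - B m) \<le> d/2 * (1/2)^Suc m"
      using PrBC unfolding Pr_def by auto
    have ne: "(\<Inter>l\<le>m. C l) \<noteq> {}" for m
    proof -
      have IB: "(\<Inter>l\<le>m. B l) \<in> D" using B by (intro D_finINT) auto
      have sub: "A m - (\<Inter>l\<le>m. B l) \<subseteq> (\<Union>l\<le>m. A l - B l)"
        using dec by (auto simp: decseq_def)
      have "c (A m - (\<Inter>l\<le>m. B l)) \<le> c (\<Union>l\<le>m. A l - B l)"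
        using sub by (intro c_mono D_Diff AD IB D_finUN) (auto intro: D_Diff AD B)
      also have "\<dots> \<le> (\<Sum>l\<le>m. c (A l - B l))"
        by (intro c_finUN) (auto intro: D_Diff AD B)
      also have "\<dots> \<le> (\<Sum>l\<le>m. d/2 * (1/2)^Suc l)"
        by (intro sum_mono C(4))
      also have "\<dots> = d/2 * (1 - (1/2)^Suc m)"
        unfolding sum_distrib_left[symmetric] geom_half ..
      also have "\<dots> < d/2" using d by simp
      finally have s: "c (A m - (\<Inter>l\<le>m. B l)) < d/2" .
      have "c (A m) \<le> c (\<Inter>l\<le>m. B l) + c (A m - (\<Inter>l\<le>m. B l))"
        by (rule c_sub_le) (auto intro: AD IB D_Diff)
      hence "c (\<Inter>l\<le>m. B l) > 0" using s big[of m] d by linarith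
      hence "(\<Inter>l\<le>m. B l) \<noteq> {}" using c_empty by auto
      moreover have "(\<Inter>l\<le>m. B l) \<subseteq> (\<Inter>l\<le>m. C l)" using C(1) by blast
      ultimately show ?thesis by blast
    qed
    have "(\<Inter>l. C l) \<noteq> {}" by (rule nested_compact[OF C(3) ne])
    moreover have "(\<Inter>l. C l) \<subseteq> (\<Inter>l. A l)" using C(2) by blast
    ultimately show False using emp by auto
  qed
  show ?thesis
    unfolding LIMSEQ_iff
  proof (intro allI impI)
    fix r :: real assume r: "r > 0"
    obtain m where m: "c (A m) < r" using small[OF r] by blast
    have "\<forall>i\<ge>m. norm (c (A i) - 0) < r"
    proof (intro allI impI)
      fix i assume "i \<ge> m"
      hence "c (A i) \<le> c (A m)" using dec c_mono[OF AD AD] by (auto simp: decseq_def)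
      thus "norm (c (A i) - 0) < r" using m c_nonneg[of "A i"] by auto
    qed
    thus "\<exists>no. \<forall>i\<ge>no. norm (c (A i) - 0) < r" by blast
  qed
qed

end


lemma sets_PiM_rect:
  assumes "UNIV \<in> E" "finite I"
  shows "sets (PiM I (\<lambda>_. sigma (UNIV::'a set) E)) =
     sigma_sets (PiE I (\<lambda>_. UNIV)) {PiE I A | A. \<forall>i\<in>I. A i \<in> E}"
proof -
  have "sets (PiM I (\<lambda>_. sigma (UNIV::'a set) E)) =
      sigma_sets (PiE I (\<lambda>_. UNIV)) {{f\<in>PiE I (\<lambda>_. UNIV). \<forall>i\<in>j. f i \<in> A i} | A j. j \<in> {I} \<and> A \<in> Pi j (\<lambda>_. E)}"
  proof (subst sets_PiM_sigma[where J="{I}"])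
    show "\<exists>S\<subseteq>E. countable S \<and> UNIV = \<Union>S" for i
      using assms(1) by (intro exI[of _ "{UNIV}"]) auto
  qed (use assms(2) in \<open>auto intro!: sets_measure_of\<close>)
  also have "{{f\<in>PiE I (\<lambda>_. UNIV). \<forall>i\<in>j. f i \<in> A i} | A j. j \<in> {I} \<and> A \<in> Pi j (\<lambda>_. E)}
      = {PiE I A | A. \<forall>i\<in>I. A i \<in> E}"
  proof (intro equalityI subsetI)
    fix X assume "X \<in> {{f\<in>PiE I (\<lambda>_. UNIV). \<forall>i\<in>j. f i \<in> A i} | A j. j \<in> {I} \<and> A \<in> Pi j (\<lambda>_. E)}"
    then obtain A where A: "A \<in> Pi I (\<lambda>_. E)" "X = {f\<in>PiE I (\<lambda>_. UNIV). \<forall>i\<in>I. f i \<in> A i}" by blast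
    have "X = PiE I A" unfolding A(2) by (auto simp: PiE_def Pi_def)
    thus "X \<in> {PiE I A | A. \<forall>i\<in>I. A i \<in> E}" using A(1) by blast
  next
    fix X assume "X \<in> {PiE I A | A. \<forall>i\<in>I. A i \<in> E}"
    then obtain A where A: "\<forall>i\<in>I. A i \<in> E" "X = PiE I A" by blast
    have "X = {f\<in>PiE I (\<lambda>_. UNIV). \<forall>i\<in>I. f i \<in> A i}" unfolding A(2) by (auto simp: PiE_def Pi_def)
    thus "X \<in> {{f\<in>PiE I (\<lambda>_. UNIV). \<forall>i\<in>j. f i \<in> A i} | A j. j \<in> {I} \<and> A \<in> Pi j (\<lambda>_. E)}"
      using A(1) by blast
  qed
  finally show ?thesis .
qed

context th6 begin

definition Rect :: "nat \<Rightarrow> (nat \<Rightarrow> 'a) set set" where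
  "Rect m = {PiE {..<m} A | A. \<forall>i\<in>{..<m}. A i \<in> S0}"

lemma sets_MB_Rect: "sets (MB m) = sigma_sets (Om m) (Rect m)"
  unfolding sets_MB_eq Om_def Rect_def by (rule sets_PiM_rect) (auto simp: UNIV_S0)

lemma Rect_Om: "Om m \<in> Rect m"
  unfolding Rect_def Om_def using UNIV_S0 by auto

lemma Rect_Int_stable: "Int_stable (Rect m)"
  unfolding Int_stable_def Rect_def
proof (intro ballI)
  fix a b assume "a \<in> {PiE {..<m} A | A. \<forall>i\<in>{..<m}. A i \<in> S0}" "b \<in> {PiE {..<m} A | A. \<forall>i\<in>{..<m}. A i \<in> S0}"
  then obtain A B where AB: "\<forall>i\<in>{..<m}. A i \<in> S0" "a = PiE {..<m} A" "\<forall>i\<in>{..<m}. B i \<in> S0" "b = PiE {..<m} B"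
    by blast
  have "a \<inter> b = PiE {..<m} (\<lambda>i. A i \<inter> B i)" unfolding AB(2,4) by (rule PiE_Int)
  moreover have "\<forall>i\<in>{..<m}. A i \<inter> B i \<in> S0" using AB S0_Int by auto
  ultimately show "a \<inter> b \<in> {PiE {..<m} A | A. \<forall>i\<in>{..<m}. A i \<in> S0}" by blast
qed

lemma Rect_Pow: "Rect m \<subseteq> Pow (Om m)"
  unfolding Rect_def Om_def by (auto simp: PiE_def Pi_def)

lemma sigma_Good: "sigma_sets (Om N) Good = sets (MB N)"
proof
  have "Good \<subseteq> sets (MB N)" using Good_D D_MB by blast
  from sets.sigma_sets_subset[OF this] show "sigma_sets (Om N) Good \<subseteq> sets (MB N)" by simp
  have "Rect N \<subseteq> Good" unfolding Rect_def using rect_Good by auto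
  thus "sets (MB N) \<subseteq> sigma_sets (Om N) Good"
    unfolding sets_MB_Rect by (rule sigma_sets_mono')
qed

lemma exists_mu: "\<exists>\<mu>. (\<forall>s\<in>Good. \<mu> s = ennreal (c s)) \<and> measure_space (Om N) (sets (MB N)) \<mu>"
proof -
  interpret Ga: algebra "Om N" Good by (rule Good_algebra)
  have "\<exists>\<mu>. (\<forall>s\<in>Good. \<mu> s = ennreal (c s)) \<and> measure_space (Om N) (sigma_sets (Om N) Good) \<mu>"
  proof (rule Ga.caratheodory_empty_continuous)
    show "positive Good (\<lambda>s. ennreal (c s))" unfolding positive_def by (simp add: c_empty)
    show "additive Good (\<lambda>s. ennreal (c s))" unfolding additive_def
      using c_add Good_D c_nonneg by (simp add: ennreal_plus)
    show "\<And>A. A \<in> Good \<Longrightarrow> ennreal (c A) \<noteq> \<infinity>" by simp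
    fix A :: "nat \<Rightarrow> (nat \<Rightarrow> 'a) set"
    assume "range A \<subseteq> Good" "decseq A" "(\<Inter>i. A i) = {}"
    from tendsto_ennrealI[OF cont_Good[OF this]]
    show "(\<lambda>i. ennreal (c (A i))) \<longlonglongrightarrow> 0" by simp
  qed
  thus ?thesis unfolding sigma_Good .
qed

definition mu where "mu = (SOME \<mu>. (\<forall>s\<in>Good. \<mu> s = ennreal (c s)) \<and> measure_space (Om N) (sets (MB N)) \<mu>)"

lemma mu: "\<And>s. s \<in> Good \<Longrightarrow> mu s = ennreal (c s)" "measure_space (Om N) (sets (MB N)) mu"
  using someI_ex[OF exists_mu] unfolding mu_def[symmetric] by auto

definition QN where "QN = measure_of (Om N) (sets (MB N)) mu"

lemma QN_sets: "sets QN = sets (MB N)"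
  unfolding QN_def using sets.space_closed[of "MB N"] by (simp add: sets.sigma_sets_eq[of "MB N", simplified])

lemma QN_space: "space QN = Om N"
  using sets_eq_imp_space_eq[OF QN_sets] by simp

lemma QN_em: "A \<in> sets (MB N) \<Longrightarrow> emeasure QN A = mu A"
  unfolding QN_def using mu(2) unfolding measure_space_def
  by (intro emeasure_measure_of_sigma) auto

lemma QN_Good: "A \<in> Good \<Longrightarrow> emeasure QN A = ennreal (c A)"
proof -
  assume A: "A \<in> Good"
  have "A \<in> sets (MB N)" using D_MB Good_D[OF A] by blast
  thus ?thesis using QN_em mu(1)[OF A] by simp
qed

lemma QN_prob: "prob_space QN"
proof
  have "Om N \<in> Good" using algebra.top[OF Good_algebra] .
  thus "emeasure QN (space QN) = 1" using QN_Good c_Om QN_space by simp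
qed

end


context th6 begin

lemma QN_exch: "exchangeable borel N QN"
  unfolding exchangeable_def
proof (intro conjI allI impI)
  show "prob_space QN" by (rule QN_prob)
  show "sets QN = sets (MB N)" by (rule QN_sets)
  fix \<pi> assume pi: "\<pi> permutes {..<N}"
  define f where "f = (\<lambda>x::nat \<Rightarrow> 'a. \<lambda>i\<in>{..<N}. x (\<pi> i))"
  have fm: "f \<in> measurable (MB N) (MB N)" unfolding f_def
    by (rule measurable_restrict, rule measurable_component_singleton)
       (use permutes_in_image[OF pi] in auto)
  have fmQ: "f \<in> measurable QN (MB N)"
    using fm measurable_cong_sets[OF QN_sets refl] by blast
  show "distr QN (MB N) (\<lambda>x. \<lambda>i\<in>{..<N}. x (\<pi> i)) = QN"
    unfolding f_def[symmetric]
  proof (rule measure_eqI_generator_eq[OF Rect_Int_stable Rect_Pow])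
    show "sets (distr QN (MB N) f) = sigma_sets (Om N) (Rect N)" by (simp add: sets_MB_Rect)
    show "sets QN = sigma_sets (Om N) (Rect N)" by (simp add: QN_sets sets_MB_Rect)
    show "range (\<lambda>_. Om N) \<subseteq> Rect N" using Rect_Om by auto
    show "(\<Union>i. Om N) = Om N" by simp
    show "emeasure (distr QN (MB N) f) (Om N) \<noteq> \<infinity>" for i :: nat
      using prob_space.emeasure_space_1[OF prob_space.prob_space_distr[OF QN_prob fmQ]] by simp
    fix X assume "X \<in> Rect N"
    then obtain V where V: "\<forall>i\<in>{..<N}. V i \<in> S0" "X = PiE {..<N} V" unfolding Rect_def by blast
    have XG: "X \<in> Good" unfolding V(2) using V(1) by (intro rect_Good) auto
    have XS: "X \<in> sets (MB N)" using XG Good_D D_MB by blast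
    define Y where "Y = PiE {..<N} (\<lambda>l. V (inv \<pi> l))"
    have invpi: "inv \<pi> l < N" if "l < N" for l
      using permutes_in_image[OF permutes_inv[OF pi], of l] that by auto
    have YG: "Y \<in> Good" unfolding Y_def using V(1) invpi by (intro rect_Good) auto
    have pre: "f -` X \<inter> space QN = Y"
    proof (intro equalityI subsetI)
      fix x assume x: "x \<in> f -` X \<inter> space QN"
      hence xe: "x \<in> extensional {..<N}" by (simp add: QN_space Om_def PiE_def)
      have "x l \<in> V (inv \<pi> l)" if l: "l < N" for l
      proof -
        have "f x (inv \<pi> l) \<in> V (inv \<pi> l)" using x invpi[OF l] unfolding V(2) by (auto simp: PiE_def Pi_def)
        thus ?thesis using invpi[OF l] permutes_inverses(1)[OF pi] by (simp add: f_def)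
      qed
      thus "x \<in> Y" using xe by (auto simp: Y_def PiE_def Pi_def)
    next
      fix x assume x: "x \<in> Y"
      hence xs: "x \<in> space QN" by (auto simp: Y_def QN_space Om_def PiE_def)
      have "f x i \<in> V i" if i: "i < N" for i
      proof -
        have "\<pi> i < N" using permutes_in_image[OF pi] i by auto
        hence "x (\<pi> i) \<in> V (inv \<pi> (\<pi> i))" using x by (auto simp: Y_def PiE_def Pi_def)
        thus ?thesis using i permutes_inverses(2)[OF pi] by (simp add: f_def)
      qed
      hence "f x \<in> X" unfolding V(2) by (auto simp: f_def PiE_def Pi_def)
      thus "x \<in> f -` X \<inter> space QN" using xs by blast
    qed
    have "emeasure (distr QN (MB N) f) X = emeasure QN (f -` X \<inter> space QN)"
      by (rule emeasure_distr[OF fmQ XS])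
    also have "\<dots> = ennreal (c Y)" unfolding pre by (rule QN_Good[OF YG])
    also have "Y = {x \<in> Om N. f x \<in> X}" using pre QN_space by auto
    also have "c {x \<in> Om N. f x \<in> X} = c X"
      unfolding f_def by (rule c_perm(2)[OF pi Good_D[OF XG]])
    also have "ennreal (c X) = emeasure QN X" using QN_Good[OF XG] by simp
    finally show "emeasure (distr QN (MB N) f) X = emeasure QN X" .
  qed
qed

lemma QN_marg:
  assumes A: "A \<in> sets (MB n)"
  shows "measure P A = measure QN {x \<in> space (MB N). restrict x {..<n} \<in> A}"
proof -
  define f where "f = (\<lambda>x::nat \<Rightarrow> 'a. restrict x {..<n})"
  have fm: "f \<in> measurable (MB N) (MB n)" unfolding f_def
    by (rule measurable_restrict_subset) (use Nn in auto)
  have fmQ: "f \<in> measurable QN (MB n)"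
    using fm measurable_cong_sets[OF QN_sets refl] by blast
  define R where "R = distr QN (MB n) f"
  have "P = R" unfolding R_def
  proof (rule measure_eqI_generator_eq[OF Rect_Int_stable Rect_Pow])
    show "sets (distr QN (MB n) f) = sigma_sets (Om n) (Rect n)" by (simp add: sets_MB_Rect)
    show "sets P = sigma_sets (Om n) (Rect n)" by (simp add: P_sets sets_MB_Rect)
    show "range (\<lambda>_. Om n) \<subseteq> Rect n" using Rect_Om by auto
    show "(\<Union>i. Om n) = Om n" by simp
    show "emeasure P (Om n) \<noteq> \<infinity>" for i :: nat
      using prob_space.emeasure_space_1[OF P_prob] P_space by simp
    fix X assume "X \<in> Rect n"
    then obtain V where V: "\<forall>i\<in>{..<n}. V i \<in> S0" "X = PiE {..<n} V" unfolding Rect_def by blast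
    obtain j where j: "\<forall>l<n. V l \<in> G j" using finite_in_G[of n V] V by auto
    have XG: "X \<in> sets (MG j n)" unfolding V(2)
      by (rule sets_PiM_I_finite) (use j sets_sigmaG in auto)
    have XS: "X \<in> sets (MB n)" using XG MG_MB by blast
    define Y where "Y = PiE {..<N} (\<lambda>l. if l < n then V l else UNIV)"
    have YG: "Y \<in> Good" unfolding Y_def using V(1) UNIV_S0 by (intro rect_Good) auto
    have pre: "f -` X \<inter> space QN = Y"
    proof (intro equalityI subsetI)
      fix x assume x: "x \<in> f -` X \<inter> space QN"
      hence xe: "x \<in> extensional {..<N}" by (simp add: QN_space Om_def PiE_def)
      have "x l \<in> V l" if "l < n" for l using x that unfolding V(2) by (auto simp: f_def PiE_def Pi_def)
      thus "x \<in> Y" using xe by (auto simp: Y_def PiE_def Pi_def)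
    next
      fix x assume x: "x \<in> Y"
      hence xs: "x \<in> space QN" by (auto simp: Y_def QN_space Om_def PiE_def)
      have xl: "x l \<in> V l" if "l < n" for l
      proof -
        have "l < N" using that Nn by auto
        hence "x l \<in> (if l < n then V l else UNIV)" using x by (auto simp: Y_def PiE_def Pi_def)
        thus ?thesis using that by simp
      qed
      have "f x \<in> X" unfolding V(2) using xl by (auto simp: f_def PiE_def Pi_def)
      thus "x \<in> f -` X \<inter> space QN" using xs by blast
    qed
    have "emeasure P X = ennreal (measure P X)"
      using finite_measure.emeasure_eq_measure[OF prob_space.finite_measure[OF P_prob]] by simp
    also have "measure P X = c {x \<in> Om N. restrict x {..<n} \<in> X}" using c_marg(2)[OF XG] by simp
    also have "{x \<in> Om N. restrict x {..<n} \<in> X} = Y" using pre QN_space by (auto simp: f_def)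
    also have "ennreal (c Y) = emeasure QN (f -` X \<inter> space QN)" unfolding pre by (rule QN_Good[OF YG, symmetric])
    also have "\<dots> = emeasure (distr QN (MB n) f) X" by (rule emeasure_distr[OF fmQ XS, symmetric])
    finally show "emeasure P X = emeasure (distr QN (MB n) f) X" .
  qed
  hence "measure P A = measure R A" by simp
  also have "\<dots> = measure QN (f -` A \<inter> space QN)" unfolding R_def by (rule measure_distr[OF fmQ A])
  also have "f -` A \<inter> space QN = {x \<in> space (MB N). restrict x {..<n} \<in> A}"
    using QN_space by (auto simp: f_def)
  finally show ?thesis .
qed

lemma result: "extendible borel n N P"
  unfolding extendible_def using exch QN_exch QN_marg by blast

end

theorem theorem6:
  fixes S0 :: "'a::t2_space set set"
    and P :: "(nat \<Rightarrow> 'a) measure"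
    and G :: "nat \<Rightarrow> 'a set set"
    and Pk :: "nat \<Rightarrow> (nat \<Rightarrow> 'a) measure"
    and n N :: nat
  assumes lc: "locally_compact_space (euclidean :: 'a topology)"
    and alg: "algebra UNIV S0"
    and gen: "sigma_sets UNIV S0 = sets (borel :: 'a measure)"
    and n_pos: "0 < n"
    and exch: "exchangeable borel n P"
    and tight: "\<And>\<epsilon>. \<epsilon> > 0 \<Longrightarrow> \<exists>V \<in> S0. \<exists>K. compact K \<and> V \<subseteq> K \<and>
        measure P {x \<in> space (PiM {..<n} (\<lambda>_. borel)). x 0 \<in> V} \<ge> 1 - \<epsilon>"
    and reg: "\<And>\<epsilon> V. \<epsilon> > 0 \<Longrightarrow> V \<in> S0 \<Longrightarrow> \<exists>U W. open U \<and> W \<in> S0 \<and> V \<subseteq> U \<and> U \<subseteq> W \<and>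
        measure P {x \<in> space (PiM {..<n} (\<lambda>_. borel)). x 0 \<in> W - V} \<le> \<epsilon>"
    and G_sigma: "\<And>k. sigma_algebra UNIV (G k)"
    and G_inc: "\<And>k. G k \<subseteq> G (Suc k)"
    and G_union: "(\<Union>k. G k) = S0"
    and Pk_prob: "\<And>k. prob_space (Pk k)"
    and Pk_sets: "\<And>k. sets (Pk k) = sets (PiM {..<n} (\<lambda>_. sigma UNIV (G k)))"
    and conv: "(\<lambda>k. SUP A \<in> sets (PiM {..<n} (\<lambda>_. sigma UNIV (G k))).
                  \<bar>measure (Pk k) A - measure P A\<bar>) \<longlonglongrightarrow> 0"
    and Nn: "N > n"
    and Pk_ext: "\<And>k. extendible (sigma UNIV (G k)) n N (Pk k)"
  shows "extendible borel n N P"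
proof -
  interpret th6 S0 P G Pk n N
    by (rule th6.intro[OF alg gen n_pos exch tight reg G_sigma G_inc G_union Pk_prob Pk_sets conv Nn Pk_ext])
  show ?thesis by (rule result)
qed

end
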